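(* Let $\Bbbk$ be an algebraically closed field of characteristic $2$ and let $\mathfrak{u}(\mathfrak{m})$ be the algebra generated by $a,b,c$ with relations $ab+ba=c$, $ac+ca=a$, $bc+cb=b$, $a^4=b^4=0$, $c^2+c=0$. Then $\operatorname{Ext}^1_{\mathfrak{u}(\mathfrak{m})}(V_1,V_1)=0$.
   Context: $V_1$ is the three-dimensional module with basis $v_1,v_2,v_3$ and action $av_1=v_2$, $av_2=v_3$, $av_3=0$; $bv_1=0$, $bv_2=v_1$, $bv_3=v_2$; $cv_1=v_1$, $cv_2=0$, $cv_3=v_3$. *)

theory Defs
  imports Main "HOL-Computational_Algebra.Polynomial" "HOL-Library.Product_Plus"
begin

definition alg_closed :: "'k::field itself \<Rightarrow> bool" where
  "alg_closed _ \<longleftrightarrow> (\<forall>p::'k poly. degree p > 0 \<longrightarrow> (\<exists>x. poly p x = 0))"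

definition um_module ::
  "('k::field \<Rightarrow> 'e::ab_group_add \<Rightarrow> 'e) \<Rightarrow> ('e \<Rightarrow> 'e) \<Rightarrow> ('e \<Rightarrow> 'e) \<Rightarrow> ('e \<Rightarrow> 'e) \<Rightarrow> bool" where
  "um_module s A B C \<longleftrightarrow>
     Vector_Spaces.linear s s A \<and> Vector_Spaces.linear s s B \<and> Vector_Spaces.linear s s C \<and>
     (\<forall>v. A (B v) + B (A v) = C v) \<and>
     (\<forall>v. A (C v) + C (A v) = A v) \<and>
     (\<forall>v. B (C v) + C (B v) = B v) \<and>
     (\<forall>v. (A ^^ 4) v = 0) \<and> (\<forall>v. (B ^^ 4) v = 0) \<and>
     (\<forall>v. C (C v) + C v = 0)"

definition um_hom ::
  "('k::field \<Rightarrow> 'e::ab_group_add \<Rightarrow> 'e) \<Rightarrow> ('e \<Rightarrow> 'e) \<Rightarrow> ('e \<Rightarrow> 'e) \<Rightarrow> ('e \<Rightarrow> 'e) \<Rightarrow>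
   ('k \<Rightarrow> 'f::ab_group_add \<Rightarrow> 'f) \<Rightarrow> ('f \<Rightarrow> 'f) \<Rightarrow> ('f \<Rightarrow> 'f) \<Rightarrow> ('f \<Rightarrow> 'f) \<Rightarrow>
   ('e \<Rightarrow> 'f) \<Rightarrow> bool" where
  "um_hom s1 A1 B1 C1 s2 A2 B2 C2 f \<longleftrightarrow>
     Vector_Spaces.linear s1 s2 f \<and>
     (\<forall>v. f (A1 v) = A2 (f v)) \<and> (\<forall>v. f (B1 v) = B2 (f v)) \<and> (\<forall>v. f (C1 v) = C2 (f v))"

text \<open>The module V_1 on k^3, coordinates w.r.t. the basis v1, v2, v3:
  (x,y,z) = x v1 + y v2 + z v3.\<close>
definition V1_scale :: "'k::field \<Rightarrow> 'k \<times> 'k \<times> 'k \<Rightarrow> 'k \<times> 'k \<times> 'k" where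
  "V1_scale r v = (case v of (x, y, z) \<Rightarrow> (r * x, r * y, r * z))"

definition V1_a :: "'k::field \<times> 'k \<times> 'k \<Rightarrow> 'k \<times> 'k \<times> 'k" where
  "V1_a v = (case v of (x, y, z) \<Rightarrow> (0, x, y))"

definition V1_b :: "'k::field \<times> 'k \<times> 'k \<Rightarrow> 'k \<times> 'k \<times> 'k" where
  "V1_b v = (case v of (x, y, z) \<Rightarrow> (y, z, 0))"

definition V1_c :: "'k::field \<times> 'k \<times> 'k \<Rightarrow> 'k \<times> 'k \<times> 'k" where
  "V1_c v = (case v of (x, y, z) \<Rightarrow> (x, 0, z))"

end

theory Submission
  imports Defs
begin

lemma lin_zero:
  fixes f :: "'a::monoid_add \<Rightarrow> 'b::ab_group_add"
  assumes "\<And>x y. f (x + y) = f x + f y"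
  shows "f 0 = 0"
proof -
  have "f 0 = f 0 + f 0" using assms[of 0 0] by simp
  thus ?thesis by simp
qed

theorem lemma3p8:
  fixes s :: "'k::field \<Rightarrow> 'e::ab_group_add \<Rightarrow> 'e"
    and A B C :: "'e \<Rightarrow> 'e"
    and i :: "'k \<times> 'k \<times> 'k \<Rightarrow> 'e"
    and p :: "'e \<Rightarrow> 'k \<times> 'k \<times> 'k"
  assumes "alg_closed TYPE('k)"
    and "(2::'k) = 0"
    and "um_module s A B C"
    and "um_hom V1_scale V1_a V1_b V1_c s A B C i"
    and "um_hom s A B C V1_scale V1_a V1_b V1_c p"
    and "inj i" and "surj p"
    and "range i = {e. p e = 0}"
  shows "\<exists>\<sigma>. um_hom V1_scale V1_a V1_b V1_c s A B C \<sigma> \<and> (\<forall>v. p (\<sigma> v) = v)"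
proof -
  note M = assms(3)[unfolded um_module_def]
  note Hi = assms(4)[unfolded um_hom_def]
  note Hp = assms(5)[unfolded um_hom_def]
  note LA = Vector_Spaces.linear_iff[THEN iffD1, OF M[THEN conjunct1]]
  note LB = Vector_Spaces.linear_iff[THEN iffD1, OF M[THEN conjunct2, THEN conjunct1]]
  note LC = Vector_Spaces.linear_iff[THEN iffD1, OF M[THEN conjunct2, THEN conjunct2, THEN conjunct1]]
  note M2 = M[THEN conjunct2, THEN conjunct2, THEN conjunct2]
  note Li = Vector_Spaces.linear_iff[THEN iffD1, OF Hi[THEN conjunct1]]
  note Lp = Vector_Spaces.linear_iff[THEN iffD1, OF Hp[THEN conjunct1]]
  have vs: "vector_space s" by (rule LA[THEN conjunct1])
  have vs1: "vector_space (V1_scale :: 'k \<Rightarrow> _)" by (rule Li[THEN conjunct1])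
  interpret vector_space s by (rule vs)
  have Aadd: "\<And>x y. A (x + y) = A x + A y" using LA[THEN conjunct2, THEN conjunct2, THEN conjunct1] by blast
  have Ascale: "\<And>c x. A (s c x) = s c (A x)" using LA[THEN conjunct2, THEN conjunct2, THEN conjunct2] by blast
  have Badd: "\<And>x y. B (x + y) = B x + B y" using LB[THEN conjunct2, THEN conjunct2, THEN conjunct1] by blast
  have Bscale: "\<And>c x. B (s c x) = s c (B x)" using LB[THEN conjunct2, THEN conjunct2, THEN conjunct2] by blast
  have Cadd: "\<And>x y. C (x + y) = C x + C y" using LC[THEN conjunct2, THEN conjunct2, THEN conjunct1] by blast
  have Cscale: "\<And>c x. C (s c x) = s c (C x)" using LC[THEN conjunct2, THEN conjunct2, THEN conjunct2] by blast
  have AB: "\<And>v. A (B v) + B (A v) = C v" using M2[THEN conjunct1] by blast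
  have AC: "\<And>v. A (C v) + C (A v) = A v" using M2[THEN conjunct2, THEN conjunct1] by blast
  have BC: "\<And>v. B (C v) + C (B v) = B v" using M2[THEN conjunct2, THEN conjunct2, THEN conjunct1] by blast
  have CC: "\<And>v. C (C v) + C v = 0" using M2[THEN conjunct2, THEN conjunct2, THEN conjunct2, THEN conjunct2, THEN conjunct2] by blast
  have iadd: "\<And>x y. i (x + y) = i x + i y" using Li[THEN conjunct2, THEN conjunct2, THEN conjunct1] by blast
  have iA: "\<And>v. i (V1_a v) = A (i v)" using Hi[THEN conjunct2, THEN conjunct1] by blast
  have iB: "\<And>v. i (V1_b v) = B (i v)" using Hi[THEN conjunct2, THEN conjunct2, THEN conjunct1] by blast
  have iC: "\<And>v. i (V1_c v) = C (i v)" using Hi[THEN conjunct2, THEN conjunct2, THEN conjunct2] by blast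
  have padd: "\<And>x y. p (x + y) = p x + p y" using Lp[THEN conjunct2, THEN conjunct2, THEN conjunct1] by blast
  have pscale: "\<And>c x. p (s c x) = V1_scale c (p x)" using Lp[THEN conjunct2, THEN conjunct2, THEN conjunct2] by blast
  have pA: "\<And>v. p (A v) = V1_a (p v)" using Hp[THEN conjunct2, THEN conjunct1] by blast
  have pB: "\<And>v. p (B v) = V1_b (p v)" using Hp[THEN conjunct2, THEN conjunct2, THEN conjunct1] by blast
  have pC: "\<And>v. p (C v) = V1_c (p v)" using Hp[THEN conjunct2, THEN conjunct2, THEN conjunct2] by blast
  have A0: "A 0 = 0" using Aadd by (rule lin_zero)
  have B0: "B 0 = 0" using Badd by (rule lin_zero)
  have C0: "C 0 = 0" using Cadd by (rule lin_zero)
  have i0: "i 0 = 0" using iadd by (rule lin_zero)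
  have p0: "p 0 = 0" using padd by (rule lin_zero)
  have two: "\<And>x::'e. x + x = 0"
  proof -
    fix x :: 'e
    have "x + x = s 1 x + s 1 x" by simp
    also have "\<dots> = s (1 + 1) x" by (rule scale_left_distrib[symmetric])
    finally show "x + x = 0" using assms(2) by simp
  qed
  have neg: "\<And>x::'e. - x = x" using two by (simp add: neg_eq_iff_add_eq_0)
  have pi: "\<And>w. p (i w) = 0" using assms(8) by auto
  have ker: "\<And>x. p x = 0 \<Longrightarrow> \<exists>u. x = i u" 
  proof -
    fix x assume "p x = 0"
    hence "x \<in> range i" using assms(8) by simp
    thus "\<exists>u. x = i u" by blast
  qed
  have iz: "\<And>u. i u = 0 \<Longrightarrow> u = 0" using injD[OF assms(6)] i0 by metis
  obtain e0 where pe0: "p e0 = (1,0,0)" using surjD[OF assms(7), of "(1,0,0)"] by metis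
  define e1 where "e1 = C e0"
  have Ce1: "C e1 = e1" 
  proof -
    have "C (C e0) = - C e0" using CC[of e0] by (simp add: eq_neg_iff_add_eq_0)
    thus ?thesis unfolding e1_def using neg[of "C e0"] by simp
  qed
  have pe1: "p e1 = (1,0,0)" unfolding e1_def using pC pe0 by (simp add: V1_c_def)
  have "p (B e1) = 0" using pB pe1 by (simp add: V1_b_def zero_prod_def)
  then obtain u where u: "B e1 = i u" using ker by blast
  have "C (B e1) = 0" using BC[of e1] Ce1 by simp
  hence "i (V1_c u) = 0" using iC u by simp
  hence "V1_c u = 0" by (rule iz)
  hence uform: "u = (0, fst (snd u), 0)" by (cases u rule: prod_cases3) (auto simp: V1_c_def zero_prod_def)
  define w where "w = (0::'k, 0::'k, fst (snd u))"
  define e where "e = e1 + i w"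
  have "B (i w) = i u" using iB[of w] uform by (simp add: w_def V1_b_def)
  hence Be: "B e = 0" unfolding e_def using Badd u two by simp
  have Ce: "C e = e" unfolding e_def using Cadd Ce1 iC[of w] by (simp add: w_def V1_c_def)
  have pe: "p e = (1,0,0)" unfolding e_def using padd pe1 pi by simp
  have F1: "C (A e) = 0" using AC[of e] Ce by simp
  have F2: "C (A (A e)) = A (A e)" using AC[of "A e"] F1 A0 by simp
  have F3: "B (A e) = e" using AB[of e] Be A0 Ce by simp
  have F4: "B (A (A e)) = A e" 
  proof -
    have "A e + B (A (A e)) = 0" using AB[of "A e"] F1 F3 by simp
    hence "B (A (A e)) = - A e" by (simp add: eq_neg_iff_add_eq_0 add.commute)
    thus ?thesis using neg[of "A e"] by simp
  qed
  have F5: "A (A (A e)) = 0"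
  proof -
    have "p (A (A (A e))) = 0" using pA pe by (simp add: V1_a_def zero_prod_def)
    then obtain t where t: "A (A (A e)) = i t" using ker by blast
    have "C (A (A (A e))) = 0" using AC[of "A (A e)"] F2 by simp
    hence c: "V1_c t = 0" using iC t iz by metis
    have "B (A (A (A e))) = 0" using AB[of "A (A e)"] F4 F2 by simp
    hence b: "V1_b t = 0" using iB t iz by metis
    have "t = 0" using b c by (cases t rule: prod_cases3) (auto simp: V1_b_def V1_c_def zero_prod_def)
    thus ?thesis using t i0 by simp
  qed
  define \<sigma> where "\<sigma> v = (case v of (x, y, z) \<Rightarrow> s x e + s y (A e) + s z (A (A e)))" for v
  have "um_hom V1_scale V1_a V1_b V1_c s A B C \<sigma>"
    unfolding um_hom_def Vector_Spaces.linear_iff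
  proof (intro conjI allI)
    show "vector_space (V1_scale :: 'k \<Rightarrow> _)" by (rule vs1)
    show "vector_space s" by (rule vs)
    fix x y :: "'k \<times> 'k \<times> 'k"
    show "\<sigma> (x + y) = \<sigma> x + \<sigma> y"
      by (cases x rule: prod_cases3; cases y rule: prod_cases3) (simp add: \<sigma>_def scale_left_distrib add_ac)
  next
    fix c x
    show "\<sigma> (V1_scale c x) = s c (\<sigma> x)"
      by (cases x rule: prod_cases3) (simp add: \<sigma>_def V1_scale_def scale_right_distrib)
  next
    fix v
    show "\<sigma> (V1_a v) = A (\<sigma> v)"
      by (cases v rule: prod_cases3) (simp add: \<sigma>_def V1_a_def Aadd Ascale F5)
    show "\<sigma> (V1_b v) = B (\<sigma> v)"
      by (cases v rule: prod_cases3) (simp add: \<sigma>_def V1_b_def Badd Bscale F3 F4 Be)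
    show "\<sigma> (V1_c v) = C (\<sigma> v)"
      by (cases v rule: prod_cases3) (simp add: \<sigma>_def V1_c_def Cadd Cscale F1 F2 Ce)
  qed
  moreover have "\<forall>v. p (\<sigma> v) = v"
  proof
    fix v :: "'k \<times> 'k \<times> 'k"
    have pAe: "p (A e) = (0,1,0)" using pA pe by (simp add: V1_a_def)
    have pAAe: "p (A (A e)) = (0,0,1)" using pA pAe by (simp add: V1_a_def)
    show "p (\<sigma> v) = v"
      by (cases v rule: prod_cases3) (simp add: \<sigma>_def padd pscale pe pAe pAAe V1_scale_def)
  qed
  ultimately show ?thesis by blast
qed

end
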